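(* The a priori Recursive Measure satisfies the strong minimum-power blocker postulate. For every SVG $\mathcal{G}=(N,\mathcal{W})$: (1) if $S\in\mathcal{W}$ and $b\in S$ is a YES-blocker, then $RM'_b\ge 1/|S|$; (2) if $T\notin\mathcal{W}$ and $b\in N\setminus T$ is a NO-blocker, then $RM'_b\ge 1/|N\setminus T|$. (Here $1$ is the RM value of a dictator in a dictator-rule game.)
   Context: A simple voting game (SVG) is a pair $\mathcal{G}=(N,\mathcal{W})$ with $N$ a nonempty finite set of $n$ players and $\mathcal{W}\subseteq 2^N$ monotone, $\emptyset\notin\mathcal{W}$, $N\in\mathcal{W}$. Divisions are identified with their YES-sets $S\subseteq N$. Decisiveness and success: - Player $k$ is YES-decisive in $S$ if $k\in S\in\mathcal{W}$ and $S\setminus\{k\}\notin\mathcal{W}$. - Player $k$ is NO-decisive in $S$ if $k\notin S\notin\mathcal{W}$ and $S\cup\{k\}\in\mathcal{W}$. - Player $k$ is successful in $S$ if ($k\in S\in\mathcal{W}$) or ($k\notin S\notin\mathcal{W}$). Loyal children: if $S\in\mathcal{W}$, they are the sets $S\setminus\{m\}\in\mathcal{W}$ with $m\in S$. If $S\notin\mathcal{W}$, they are the sets $S\cup\{m\}\notin\mathcal{W}$ with $m\notin S$. Recursive efficacy score $\alpha_k(S)$: - $\alpha_k(S)=1$ if $k$ is decisive; - $\alpha_k(S)=0$ if $k$ is not successful; - otherwise, the average of $\alpha_k$ over the loyal children of $S$. The a priori Recursive Measure is $RM'_k=2^{-n}\sum_{S\subseteq N}\alpha_k(S)$. Blockers: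 $b$ is a YES-blocker if $b\in S$ for all $S\in\mathcal{W}$, and a NO-blocker if $b\notin S$ for all $S\notin\mathcal{W}$. *)

theory Defs
  imports Main "HOL-Library.Disjoint_Sets" Complex_Main
begin

definition svg :: "'a set \<Rightarrow> 'a set set \<Rightarrow> bool" where
  "svg N W \<longleftrightarrow> finite N \<and> N \<noteq> {} \<and> W \<subseteq> Pow N \<and>
     (\<forall>S T. S \<in> W \<and> S \<subseteq> T \<and> T \<subseteq> N \<longrightarrow> T \<in> W) \<and> {} \<notin> W \<and> N \<in> W"

definition yes_decisive :: "'a set set \<Rightarrow> 'a \<Rightarrow> 'a set \<Rightarrow> bool" where
  "yes_decisive W k S \<longleftrightarrow> k \<in> S \<and> S \<in> W \<and> S - {k} \<notin> W"

definition no_decisive :: "'a set set \<Rightarrow> 'a \<Rightarrow> 'a set \<Rightarrow> bool" where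
  "no_decisive W k S \<longleftrightarrow> k \<notin> S \<and> S \<notin> W \<and> insert k S \<in> W"

definition decisive :: "'a set set \<Rightarrow> 'a \<Rightarrow> 'a set \<Rightarrow> bool" where
  "decisive W k S \<longleftrightarrow> yes_decisive W k S \<or> no_decisive W k S"

definition successful :: "'a set set \<Rightarrow> 'a \<Rightarrow> 'a set \<Rightarrow> bool" where
  "successful W k S \<longleftrightarrow> (k \<in> S \<and> S \<in> W) \<or> (k \<notin> S \<and> S \<notin> W)"

definition loyal_children :: "'a set \<Rightarrow> 'a set set \<Rightarrow> 'a set \<Rightarrow> 'a set set" where
  "loyal_children N W S =
     (if S \<in> W then {S - {m} | m. m \<in> S \<and> S - {m} \<in> W}
      else {insert m S | m. m \<in> N - S \<and> insert m S \<notin> W})"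

lemma loyal_children_measure:
  assumes "finite N" "S \<subseteq> N" "C \<in> loyal_children N W S"
  shows "C \<subseteq> N \<and> (if C \<in> W then card C else card (N - C))
           < (if S \<in> W then card S else card (N - S))"
proof (cases "S \<in> W")
  case True
  then obtain m where m: "m \<in> S" "C = S - {m}" "C \<in> W"
    using assms(3) by (auto simp: loyal_children_def)
  have "finite S" using assms(1,2) finite_subset by blast
  then have "card C < card S" using m by (metis card_Diff1_less)
  then show ?thesis using True m assms(2) by auto
next
  case False
  then obtain m where m: "m \<in> N - S" "C = insert m S" "C \<notin> W"
    using assms(3) by (auto simp: loyal_children_def)
  have "N - C = (N - S) - {m}" using m by auto
  then have "card (N - C) < card (N - S)"
    using m assms(1) by (metis card_Diff1_less finite_Diff)
  then show ?thesis using False m assms(2) by auto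
qed

function alpha :: "'a set \<Rightarrow> 'a set set \<Rightarrow> 'a \<Rightarrow> 'a set \<Rightarrow> real" where
  "alpha N W k S =
     (if \<not> finite N \<or> \<not> S \<subseteq> N then 0
      else if decisive W k S then 1
      else if \<not> successful W k S then 0
      else (\<Sum>C\<in>loyal_children N W S. alpha N W k C) / real (card (loyal_children N W S)))"
  by pat_completeness auto
termination
  by (relation "measure (\<lambda>(N, W, k, S). if S \<in> W then card S else card (N - S))")
     (auto dest: loyal_children_measure)

definition RM :: "'a set \<Rightarrow> 'a set set \<Rightarrow> 'a \<Rightarrow> real" where
  "RM N W k = (\<Sum>S\<in>Pow N. alpha N W k S) / 2 ^ card N"

definition yes_blocker :: "'a set set \<Rightarrow> 'a \<Rightarrow> bool" where
  "yes_blocker W b \<longleftrightarrow> (\<forall>S\<in>W. b \<in> S)"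

definition no_blocker :: "'a set \<Rightarrow> 'a set set \<Rightarrow> 'a \<Rightarrow> bool" where
  "no_blocker N W b \<longleftrightarrow> (\<forall>S. S \<subseteq> N \<and> S \<notin> W \<longrightarrow> b \<notin> S)"

end

theory Submission
  imports Defs
begin

lemma sum_Pow_insert:
  fixes g :: "'a set \<Rightarrow> real"
  assumes "finite M" "b \<notin> M"
  shows "(\<Sum>X\<in>Pow (insert b M). g X) = (\<Sum>T\<in>Pow M. g T + g (insert b T))"
proof -
  have inj: "inj_on (insert b) (Pow M)" using assms(2) unfolding inj_on_def by (metis Diff_insert_absorb PowD subsetD)
  have disj: "Pow M \<inter> insert b ` Pow M = {}" using assms(2) by auto
  have "(\<Sum>X\<in>Pow (insert b M). g X) = (\<Sum>X\<in>Pow M. g X) + (\<Sum>X\<in>insert b ` Pow M. g X)"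
    unfolding Pow_insert using assms(1) disj by (simp add: sum.union_disjoint)
  also have "(\<Sum>X\<in>insert b ` Pow M. g X) = (\<Sum>T\<in>Pow M. g (insert b T))"
    using inj by (simp add: sum.reindex)
  finally show ?thesis by (simp add: sum.distrib)
qed

lemma sum_Pow_factor:
  fixes f :: "'a set \<Rightarrow> real"
  assumes "finite B" "finite A" "A \<inter> B = {}"
  shows "(\<Sum>T\<in>Pow (A \<union> B). f (T \<inter> A)) = 2 ^ card B * (\<Sum>U\<in>Pow A. f U)"
  using assms
proof (induction B rule: finite_induct)
  case empty
  have "(\<Sum>T\<in>Pow A. f (T \<inter> A)) = (\<Sum>U\<in>Pow A. f U)"
    by (rule sum.cong) (auto simp: Int_absorb2)
  then show ?case by simp
next
  case (insert x B)
  have x: "x \<notin> A \<union> B" using insert by auto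
  have "(\<Sum>T\<in>Pow (A \<union> insert x B). f (T \<inter> A)) = (\<Sum>T\<in>Pow (insert x (A \<union> B)). f (T \<inter> A))"
    by simp
  also have "\<dots> = (\<Sum>T\<in>Pow (A \<union> B). f (T \<inter> A) + f (insert x T \<inter> A))"
    using sum_Pow_insert[OF _ x] insert by simp
  also have "\<dots> = (\<Sum>T\<in>Pow (A \<union> B). 2 * f (T \<inter> A))"
    using x by (intro sum.cong) auto
  also have "\<dots> = 2 * 2 ^ card B * (\<Sum>U\<in>Pow A. f U)"
    using insert by (simp add: sum_distrib_left[symmetric])
  finally show ?case using insert by simp
qed

lemma sum_Pow_inv_card:
  assumes "finite A"
  shows "(\<Sum>V\<in>Pow A. 1 / (1 + real (card V))) = (2 ^ (card A + 1) - 1) / (real (card A) + 1)"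
proof -
  let ?a = "card A"
  have cardle: "card ` Pow A \<subseteq> {..?a}" using assms by (auto intro: card_mono)
  have "(\<Sum>V\<in>Pow A. 1 / (1 + real (card V))) =
        (\<Sum>k\<le>?a. \<Sum>V\<in>{V \<in> Pow A. card V = k}. 1 / (1 + real (card V)))"
    by (rule sum.group[OF finite_Pow_iff[THEN iffD2, OF assms] finite_atMost cardle, symmetric])
  also have "\<dots> = (\<Sum>k\<le>?a. real (?a choose k) / (1 + real k))"
  proof (rule sum.cong)
    fix k assume "k \<in> {..?a}"
    have "{V \<in> Pow A. card V = k} = {B. B \<subseteq> A \<and> card B = k}" by auto
    then have "card {V \<in> Pow A. card V = k} = ?a choose k" using n_subsets[OF assms] by simp
    moreover have "(\<Sum>V\<in>{V \<in> Pow A. card V = k}. 1 / (1 + real (card V)))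
                 = (\<Sum>V\<in>{V \<in> Pow A. card V = k}. 1 / (1 + real k))" by (rule sum.cong) auto
    ultimately show "(\<Sum>V\<in>{V \<in> Pow A. card V = k}. 1 / (1 + real (card V))) = real (?a choose k) / (1 + real k)"
      by simp
  qed simp
  also have "\<dots> = (\<Sum>k\<le>?a. real (Suc ?a choose Suc k) / (real ?a + 1))"
  proof (rule sum.cong)
    fix k
    have "real (Suc ?a) * real (?a choose k) = real (Suc ?a choose Suc k) * real (Suc k)"
      using Suc_times_binomial_eq[of ?a k] by (metis of_nat_mult)
    then show "real (?a choose k) / (1 + real k) = real (Suc ?a choose Suc k) / (real ?a + 1)"
      by (simp add: field_simps)
  qed simp
  also have "\<dots> = real (\<Sum>k\<le>?a. Suc ?a choose Suc k) / (real ?a + 1)"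
    by (simp add: sum_divide_distrib)
  also have "(\<Sum>k\<le>?a. Suc ?a choose Suc k) = 2 ^ (?a + 1) - 1"
  proof -
    have "(\<Sum>k\<le>Suc ?a. Suc ?a choose k) = 2 ^ Suc ?a" by (rule choose_row_sum)
    moreover have "(\<Sum>k\<le>Suc ?a. Suc ?a choose k) = (Suc ?a choose 0) + (\<Sum>k\<le>?a. Suc ?a choose Suc k)"
      by (rule sum.atMost_Suc_shift)
    ultimately show ?thesis by simp
  qed
  also have "real (2 ^ (?a + 1) - 1 :: nat) = 2 ^ (?a + 1) - 1"
    by (simp add: of_nat_diff)
  finally show ?thesis .
qed

declare alpha.simps[simp del]

lemma alpha_unfold: "finite N \<Longrightarrow> S \<subseteq> N \<Longrightarrow> alpha N W k S =
      (if decisive W k S then 1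
      else if \<not> successful W k S then 0
      else (\<Sum>C\<in>loyal_children N W S. alpha N W k C) / real (card (loyal_children N W S)))"
  by (subst alpha.simps) simp

lemma part1:
  assumes G: "svg N W" and SW: "S \<in> W" and bS: "b \<in> S" and yb: "yes_blocker W b"
  shows "RM N W b \<ge> 1 / real (card S)"
proof -
  have finN: "finite N" and WP: "W \<subseteq> Pow N" and mono: "\<And>X Y. X \<in> W \<Longrightarrow> X \<subseteq> Y \<Longrightarrow> Y \<subseteq> N \<Longrightarrow> Y \<in> W"
    using G unfolding svg_def by blast+
  have SN: "S \<subseteq> N" using SW WP by auto
  have finS: "finite S" using SN finN finite_subset by blast
  have bN: "b \<in> N" using bS SN by auto
  have noW: "\<And>X. b \<notin> X \<Longrightarrow> X \<notin> W" using yb unfolding yes_blocker_def by blast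
  have L1: "\<And>T. T \<subseteq> N \<Longrightarrow> T \<in> W \<Longrightarrow> alpha N W b T = 1"
  proof -
    fix T assume "T \<subseteq> N" "T \<in> W"
    moreover have "b \<in> T" using \<open>T \<in> W\<close> noW by blast
    ultimately have "decisive W b T" using noW unfolding decisive_def yes_decisive_def by blast
    then show "alpha N W b T = 1" using alpha_unfold[OF finN \<open>T \<subseteq> N\<close>] by simp
  qed
  have L0: "\<And>T. T \<subseteq> N \<Longrightarrow> b \<in> T \<Longrightarrow> T \<notin> W \<Longrightarrow> alpha N W b T = 0"
  proof -
    fix T assume T: "T \<subseteq> N" "b \<in> T" "T \<notin> W"
    then have "\<not> decisive W b T" "\<not> successful W b T"
      unfolding decisive_def yes_decisive_def no_decisive_def successful_def by auto
    then show "alpha N W b T = 0" using alpha_unfold[OF finN T(1)] by simp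
  qed
  have L2: "T \<subseteq> N \<Longrightarrow> b \<notin> T \<Longrightarrow> alpha N W b T \<ge> 1 / real (card (S - T))" for T
  proof (induction "card (N - T)" arbitrary: T rule: less_induct)
    case less
    note T = less.prems
    define c where "c = card (S - T)"
    have finST: "finite (S - T)" using finS by auto
    have c1: "c \<ge> 1" unfolding c_def using T bS finST by (metis Diff_iff card_0_eq empty_iff less_one not_le)
    have TW: "T \<notin> W" using noW T by blast
    show ?case
    proof (cases "insert b T \<in> W")
      case True
      then have "decisive W b T" using T TW unfolding decisive_def no_decisive_def by blast
      then have "alpha N W b T = 1" using alpha_unfold[OF finN T(1)] by simp
      then show ?thesis using c1 unfolding c_def by simp
    next
      case False
      have nd: "\<not> decisive W b T" using False T TW unfolding decisive_def no_decisive_def yes_decisive_def by blast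
      have sc: "successful W b T" using T TW unfolding successful_def by blast
      have LC: "loyal_children N W T = (\<lambda>m. insert m T) ` (N - T)"
      proof -
        have "\<And>m. m \<in> N - T \<Longrightarrow> insert m T \<notin> W"
          using False noW T(2) by (metis insert_iff)
        then show ?thesis using TW unfolding loyal_children_def by auto
      qed
      have inj: "inj_on (\<lambda>m. insert m T) (N - T)" unfolding inj_on_def by blast
      define r where "r = card (N - T)"
      have finNT: "finite (N - T)" using finN by auto
      have cardLC: "card (loyal_children N W T) = r" unfolding LC r_def using card_image[OF inj] .
      have alphaT: "alpha N W b T = (\<Sum>m\<in>N - T. alpha N W b (insert m T)) / real r"
      proof -
        have "sum (alpha N W b) (loyal_children N W T) = (\<Sum>m\<in>N - T. alpha N W b (insert m T))"
          unfolding LC using sum.reindex[OF inj, of "alpha N W b"] by (simp add: comp_def)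
        then show ?thesis using alpha_unfold[OF finN T(1), of W b] nd sc cardLC by simp
      qed
      define P where "P = S - T - {b}"
      define Q where "Q = N - T - S"
      have NT: "N - T = insert b (P \<union> Q)" using bN T SN unfolding P_def Q_def by auto
      have bPQ: "b \<notin> P \<union> Q" unfolding P_def Q_def using bS by auto
      have PQ: "P \<inter> Q = {}" unfolding P_def Q_def by auto
      have finP: "finite P" "finite Q" unfolding P_def Q_def using finS finN by auto
      have cP: "card P = c - 1" unfolding P_def c_def using bS T by (simp add: card_Diff_singleton finST)
      have P_ne: "P \<noteq> {}"
      proof
        assume "P = {}"
        then have "S \<subseteq> insert b T" unfolding P_def by auto
        then have "insert b T \<in> W" using mono[OF SW] T bN by auto
        then show False using False by simp
      qed
      then have c2: "c \<ge> 2" using cP finP by (metis One_nat_def Suc_1 card_0_eq c1 diff_is_0_eq le_antisym not_less_eq_eq)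
      have rcq: "r = c + card Q"
      proof -
        have "r = card (insert b (P \<union> Q))" unfolding r_def NT ..
        also have "\<dots> = Suc (card P + card Q)" using bPQ finP PQ by (simp add: card_Un_disjoint)
        finally show ?thesis using cP c1 by simp
      qed
      have IH: "\<And>m. m \<in> N - T - {b} \<Longrightarrow> alpha N W b (insert m T) \<ge> 1 / real (card (S - insert m T))"
      proof -
        fix m assume m: "m \<in> N - T - {b}"
        have "card (N - insert m T) < card (N - T)"
          using m finNT by (metis Diff_insert card_Diff1_less Diff_iff insertE)
        then show "alpha N W b (insert m T) \<ge> 1 / real (card (S - insert m T))"
          using less.hyps m T by auto
      qed
      have sumP: "(\<Sum>m\<in>P. alpha N W b (insert m T)) \<ge> (\<Sum>m\<in>P. 1 / real (c - 1))"
      proof (rule sum_mono)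
        fix m assume m: "m \<in> P"
        have "S - insert m T = (S - T) - {m}" by auto
        then have "card (S - insert m T) = c - 1" using m unfolding P_def c_def by (simp add: finST)
        moreover have "m \<in> N - T - {b}" using m SN unfolding P_def by auto
        ultimately show "alpha N W b (insert m T) \<ge> 1 / real (c - 1)" using IH by fastforce
      qed
      have sumQ: "(\<Sum>m\<in>Q. alpha N W b (insert m T)) \<ge> (\<Sum>m\<in>Q. 1 / real c)"
      proof (rule sum_mono)
        fix m assume m: "m \<in> Q"
        have "S - insert m T = S - T" using m unfolding Q_def by auto
        moreover have "m \<in> N - T - {b}" using m bS unfolding Q_def by auto
        ultimately show "alpha N W b (insert m T) \<ge> 1 / real c" using IH unfolding c_def by fastforce
      qed
      have ab: "alpha N W b (insert b T) = 0" using L0 False T bN by simp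
      have "(\<Sum>m\<in>N - T. alpha N W b (insert m T)) = alpha N W b (insert b T) + (\<Sum>m\<in>P. alpha N W b (insert m T)) + (\<Sum>m\<in>Q. alpha N W b (insert m T))"
        unfolding NT using bPQ finP PQ by (simp add: sum.union_disjoint)
      also have "\<dots> \<ge> real (c - 1) * (1 / real (c - 1)) + real (card Q) * (1 / real c)"
        using sumP sumQ ab cP by simp
      finally have ge: "(\<Sum>m\<in>N - T. alpha N W b (insert m T)) \<ge> 1 + real (card Q) / real c"
        using c2 by simp
      have pos: "real c * real c + real c * real (card Q) > 0" using c2 by (simp add: add_pos_nonneg)
      have "1 / real c = (1 + real (card Q) / real c) / real r"
        using c2 rcq pos by (simp add: field_simps)
      also have "\<dots> \<le> alpha N W b T"
        unfolding alphaT using ge rcq c2 by (simp add: divide_right_mono)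
      finally show ?thesis unfolding c_def .
    qed
  qed

  define M where "M = N - {b}"
  define A where "A = S - {b}"
  define h where "h = (\<lambda>U. 1 / (1 + real (card (A - U))) + (if U = A then 1 else 0 :: real))"
  have finM: "finite M" using finN unfolding M_def by auto
  have finA: "finite A" using finS unfolding A_def by auto
  have AM: "A \<subseteq> M" unfolding A_def M_def using SN by auto
  have NM: "N = insert b M" "b \<notin> M" unfolding M_def using bN by auto
  have "(\<Sum>X\<in>Pow N. alpha N W b X) = (\<Sum>T\<in>Pow M. alpha N W b T + alpha N W b (insert b T))"
    unfolding NM(1) using sum_Pow_insert[OF finM NM(2)] .
  also have "\<dots> \<ge> (\<Sum>T\<in>Pow M. h (T \<inter> A))"
  proof (rule sum_mono)
    fix T assume "T \<in> Pow M"
    then have T: "T \<subseteq> N" "b \<notin> T" "insert b T \<subseteq> N" unfolding M_def using bN by auto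
    have "S - T = insert b (A - T \<inter> A)" "b \<notin> A - T \<inter> A" unfolding A_def using bS T(2) by auto
    then have cST: "card (S - T) = 1 + card (A - T \<inter> A)" using finA by simp
    have a1: "alpha N W b T \<ge> 1 / (1 + real (card (A - T \<inter> A)))" using L2[OF T(1,2)] cST by simp
    have a2: "alpha N W b (insert b T) \<ge> (if T \<inter> A = A then 1 else 0)"
    proof (cases "insert b T \<in> W")
      case True then show ?thesis using L1[OF T(3)] by simp
    next
      case False
      then have "\<not> A \<subseteq> T"
        using mono[OF SW, of "insert b T"] T(3) unfolding A_def by blast
      then show ?thesis using L0[OF T(3) _ False] by auto
    qed
    show "h (T \<inter> A) \<le> alpha N W b T + alpha N W b (insert b T)"
      unfolding h_def using a1 a2 by simp
  qed
  also have "M = A \<union> (M - A)" using AM by auto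
  also have "(\<Sum>T\<in>Pow (A \<union> (M - A)). h (T \<inter> A)) = 2 ^ card (M - A) * (\<Sum>U\<in>Pow A. h U)"
    by (rule sum_Pow_factor) (use finM finA in auto)
  also have "(\<Sum>U\<in>Pow A. h U) = (\<Sum>U\<in>Pow A. 1 / (1 + real (card (A - U)))) + 1"
    unfolding h_def using finA by (simp add: sum.distrib)
  also have "(\<Sum>U\<in>Pow A. 1 / (1 + real (card (A - U)))) = (\<Sum>V\<in>Pow A. 1 / (1 + real (card V)))"
    by (rule sum.reindex_bij_witness[of _ "\<lambda>U. A - U" "\<lambda>U. A - U"]) auto
  also have "\<dots> = (2 ^ (card A + 1) - 1) / (real (card A) + 1)"
    by (rule sum_Pow_inv_card[OF finA])
  finally have ge: "(\<Sum>X\<in>Pow N. alpha N W b X) \<ge> 2 ^ card (M - A) * ((2 ^ (card A + 1) - 1) / (real (card A) + 1) + 1)" .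
  have cS: "card S = card A + 1" unfolding A_def using bS finS card_Suc_Diff1 by fastforce
  have cN: "card N = card (M - A) + card A + 1"
  proof -
    have "M = A \<union> (M - A)" using AM by auto
    then have "card M = card A + card (M - A)" using finA finM by (metis card_Un_disjoint Diff_disjoint finite_Diff)
    then show ?thesis using NM finM by simp
  qed
  define q where "q = card (M - A)"
  define a where "a = card A"
  have key: "(2::real) ^ q * ((2 ^ (a + 1) - 1) / (real a + 1) + 1) \<ge> 2 ^ (q + a + 1) / (real a + 1)"
  proof -
    have "(2 ^ (a + 1) - 1) / (real a + 1) + 1 \<ge> 2 ^ (a + 1) / (real a + 1)"
      by (simp add: field_simps)
    then have "(2::real) ^ q * ((2 ^ (a + 1) - 1) / (real a + 1) + 1) \<ge> 2 ^ q * (2 ^ (a + 1) / (real a + 1))"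
      by (rule mult_left_mono) simp
    then show ?thesis by (simp add: power_add)
  qed
  have "RM N W b = (\<Sum>X\<in>Pow N. alpha N W b X) / 2 ^ card N" unfolding RM_def ..
  also have "\<dots> \<ge> (2 ^ (q + a + 1) / (real a + 1)) / 2 ^ (q + a + 1)"
  proof -
    have G2: "(\<Sum>X\<in>Pow N. alpha N W b X) \<ge> 2 ^ (q + a + 1) / (real a + 1)"
      using order_trans[OF key ge[folded q_def a_def]] .
    have "card N = q + a + 1" using cN unfolding q_def a_def .
    then show ?thesis using divide_right_mono[OF G2, of "2 ^ (q + a + 1)"] by simp
  qed
  also have "(2 ^ (q + a + 1) / (real a + 1)) / 2 ^ (q + a + 1) = 1 / real (card S)"
    using cS unfolding a_def by simp
  finally show ?thesis .
qed

definition dual :: "'a set \<Rightarrow> 'a set set \<Rightarrow> 'a set set" where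
  "dual N W = {X. X \<subseteq> N \<and> N - X \<notin> W}"

lemma loyal_children_sub: "S \<subseteq> N \<Longrightarrow> C \<in> loyal_children N W S \<Longrightarrow> C \<subseteq> N"
  unfolding loyal_children_def by (auto split: if_splits)

lemma alpha_dual:
  "finite N \<Longrightarrow> W \<subseteq> Pow N \<Longrightarrow> k \<in> N \<Longrightarrow> S \<subseteq> N \<Longrightarrow>
   alpha N W k S = alpha N (dual N W) k (N - S)"
proof (induction N W k S rule: alpha.induct)
  case (1 N W k S)
  note fin = "1.prems"(1) and WP = "1.prems"(2) and kN = "1.prems"(3) and SN = "1.prems"(4)
  let ?D = "dual N W"
  have e1: "N - (N - S) = S" using SN by auto
  have e2: "N - (N - S - {k}) = insert k S" using SN kN by auto
  have e3: "N - insert k (N - S) = S - {k}" using SN kN by auto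
  have SD: "N - S \<in> ?D \<longleftrightarrow> S \<notin> W" unfolding dual_def using e1 by auto
  have D1: "N - S - {k} \<in> ?D \<longleftrightarrow> insert k S \<notin> W" unfolding dual_def using e2 by auto
  have D2: "insert k (N - S) \<in> ?D \<longleftrightarrow> S - {k} \<notin> W" unfolding dual_def using e3 kN by auto
  have kW: "insert k S \<in> W \<Longrightarrow> k \<in> N" using kN by simp
  have dec: "decisive ?D k (N - S) \<longleftrightarrow> decisive W k S"
    unfolding decisive_def yes_decisive_def no_decisive_def using SD D1 D2 kN by auto
  have suc: "successful ?D k (N - S) \<longleftrightarrow> successful W k S"
    unfolding successful_def using SD kN by auto
  have inj: "inj_on (\<lambda>Y. N - Y) (Pow N)" unfolding inj_on_def by blast
  have LC: "loyal_children N ?D (N - S) = (\<lambda>Y. N - Y) ` loyal_children N W S"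
  proof (cases "S \<in> W")
    case True
    then have nD: "N - S \<notin> ?D" using SD by simp
    have "loyal_children N ?D (N - S) = {insert m (N - S) | m. m \<in> S \<and> insert m (N - S) \<notin> ?D}"
      unfolding loyal_children_def using nD e1 by simp
    also have "\<dots> = {N - (S - {m}) | m. m \<in> S \<and> S - {m} \<in> W}"
    proof -
      have "\<And>m. m \<in> S \<Longrightarrow> insert m (N - S) = N - (S - {m})" using SN by auto
      moreover have "\<And>m. m \<in> S \<Longrightarrow> insert m (N - S) \<notin> ?D \<longleftrightarrow> S - {m} \<in> W"
      proof -
        fix m assume m: "m \<in> S"
        have "N - insert m (N - S) = S - {m}" "insert m (N - S) \<subseteq> N" using m SN by auto
        then show "insert m (N - S) \<notin> ?D \<longleftrightarrow> S - {m} \<in> W" unfolding dual_def by simp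
      qed
      ultimately show ?thesis by (smt (verit) Collect_cong)
    qed
    also have "\<dots> = (\<lambda>Y. N - Y) ` loyal_children N W S"
      unfolding loyal_children_def using True by auto
    finally show ?thesis .
  next
    case False
    then have nD: "N - S \<in> ?D" using SD by simp
    have "loyal_children N ?D (N - S) = {N - S - {m} | m. m \<in> N - S \<and> N - S - {m} \<in> ?D}"
      unfolding loyal_children_def using nD by simp
    also have "\<dots> = {N - insert m S | m. m \<in> N - S \<and> insert m S \<notin> W}"
    proof -
      have "\<And>m. N - S - {m} = N - insert m S" by auto
      moreover have "\<And>m. m \<in> N - S \<Longrightarrow> N - S - {m} \<in> ?D \<longleftrightarrow> insert m S \<notin> W"
      proof -
        fix m assume m: "m \<in> N - S"
        have "N - (N - S - {m}) = insert m S" "N - S - {m} \<subseteq> N" using m SN by auto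
        then show "N - S - {m} \<in> ?D \<longleftrightarrow> insert m S \<notin> W" unfolding dual_def by simp
      qed
      ultimately show ?thesis by (smt (verit) Collect_cong)
    qed
    also have "\<dots> = (\<lambda>Y. N - Y) ` loyal_children N W S"
      unfolding loyal_children_def using False by auto
    finally show ?thesis .
  qed
  have LCsub: "loyal_children N W S \<subseteq> Pow N" using loyal_children_sub[OF SN] by blast
  have injLC: "inj_on (\<lambda>Y. N - Y) (loyal_children N W S)" using inj_on_subset[OF inj LCsub] .
  have NSN: "N - S \<subseteq> N" by auto
  show ?case
  proof (cases "decisive W k S")
    case True then show ?thesis using alpha_unfold[OF fin SN] alpha_unfold[OF fin NSN] dec by simp
  next
    case nd: False
    show ?thesis
    proof (cases "successful W k S")
      case False then show ?thesis using alpha_unfold[OF fin SN] alpha_unfold[OF fin NSN] dec suc nd by simp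
    next
      case True
      have IH: "\<And>C. C \<in> loyal_children N W S \<Longrightarrow> alpha N W k C = alpha N ?D k (N - C)"
        using "1.IH" fin SN nd True WP kN loyal_children_sub[OF SN] by blast
      have "(\<Sum>C\<in>loyal_children N ?D (N - S). alpha N ?D k C) = (\<Sum>C\<in>loyal_children N W S. alpha N ?D k (N - C))"
        unfolding LC using sum.reindex[OF injLC, of "alpha N ?D k"] by (simp add: comp_def)
      also have "\<dots> = (\<Sum>C\<in>loyal_children N W S. alpha N W k C)" using IH by simp
      finally have s: "(\<Sum>C\<in>loyal_children N ?D (N - S). alpha N ?D k C) = (\<Sum>C\<in>loyal_children N W S. alpha N W k C)" .
      have c: "card (loyal_children N ?D (N - S)) = card (loyal_children N W S)"
        unfolding LC using card_image[OF injLC] .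
      show ?thesis using alpha_unfold[OF fin SN, of W k] alpha_unfold[OF fin NSN, of ?D k] dec suc nd True s c by simp
    qed
  qed
qed

lemma RM_dual:
  assumes "finite N" "W \<subseteq> Pow N" "k \<in> N"
  shows "RM N W k = RM N (dual N W) k"
proof -
  have inj: "inj_on (\<lambda>Y. N - Y) (Pow N)" unfolding inj_on_def by blast
  have im: "(\<lambda>Y. N - Y) ` Pow N = Pow N"
  proof
    show "Pow N \<subseteq> (\<lambda>Y. N - Y) ` Pow N"
    proof
      fix X assume "X \<in> Pow N"
      then have "X = N - (N - X)" "N - X \<in> Pow N" by auto
      then show "X \<in> (\<lambda>Y. N - Y) ` Pow N" by blast
    qed
  qed auto
  have "(\<Sum>X\<in>Pow N. alpha N (dual N W) k X) = (\<Sum>X\<in>(\<lambda>Y. N - Y) ` Pow N. alpha N (dual N W) k X)"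
    using im by simp
  also have "\<dots> = (\<Sum>S\<in>Pow N. alpha N (dual N W) k (N - S))"
    using sum.reindex[OF inj, of "alpha N (dual N W) k"] by (simp add: comp_def)
  also have "\<dots> = (\<Sum>S\<in>Pow N. alpha N W k S)"
    using alpha_dual[OF assms] by simp
  finally show ?thesis unfolding RM_def by simp
qed

lemma part2:
  assumes G: "svg N W" and TN: "T \<subseteq> N" and TW: "T \<notin> W" and bT: "b \<in> N - T" and nb: "no_blocker N W b"
  shows "RM N W b \<ge> 1 / real (card (N - T))"
proof -
  have finN: "finite N" and WP: "W \<subseteq> Pow N" and mono: "\<And>X Y. X \<in> W \<Longrightarrow> X \<subseteq> Y \<Longrightarrow> Y \<subseteq> N \<Longrightarrow> Y \<in> W"
    and Ne: "N \<noteq> {}" and eW: "{} \<notin> W" and NW: "N \<in> W"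
    using G unfolding svg_def by blast+
  have GD: "svg N (dual N W)" unfolding svg_def
  proof (intro conjI)
    show "\<forall>S T. S \<in> dual N W \<and> S \<subseteq> T \<and> T \<subseteq> N \<longrightarrow> T \<in> dual N W"
    proof (intro allI impI)
      fix X Y assume a: "X \<in> dual N W \<and> X \<subseteq> Y \<and> Y \<subseteq> N"
      have "N - X \<notin> W" "N - Y \<subseteq> N - X" "N - X \<subseteq> N" using a unfolding dual_def by auto
      then have "N - Y \<notin> W" using mono by blast
      then show "Y \<in> dual N W" using a unfolding dual_def by simp
    qed
  qed (use finN Ne eW NW in \<open>auto simp: dual_def\<close>)
  have yb: "yes_blocker (dual N W) b"
    unfolding yes_blocker_def dual_def using nb bT unfolding no_blocker_def by auto
  have ND: "N - T \<in> dual N W" unfolding dual_def using TN TW by (simp add: double_diff)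
  have "RM N (dual N W) b \<ge> 1 / real (card (N - T))"
    using part1[OF GD ND _ yb] bT by simp
  then show ?thesis using RM_dual[OF finN WP] bT by simp
qed

theorem theorem6:
  fixes N :: "'a set" and W :: "'a set set"
  assumes "svg N W"
  shows "(\<forall>S b. S \<in> W \<and> b \<in> S \<and> yes_blocker W b \<longrightarrow> RM N W b \<ge> 1 / real (card S)) \<and>
         (\<forall>T b. T \<subseteq> N \<and> T \<notin> W \<and> b \<in> N - T \<and> no_blocker N W b
                 \<longrightarrow> RM N W b \<ge> 1 / real (card (N - T)))"
  using part1[OF assms] part2[OF assms] by blast

end
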